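(* Let $n,k,t$ be integers with $1\le t<k\le n$, and let $m\ge 1$. Consider the $(n,k,t)$ Staircase-PIR scheme described in the context, used by a user who wants file $f_i$, $i\in\{1,\dots,m\}$. Then: (1) Privacy: for every set $T\subseteq\{1,\dots,n\}$ with $|T|=t$, the joint distribution of the queries $(\mathbf{q}_l)_{l\in T}$ does not depend on $i$; equivalently, if the index $i$ is a random variable $\texttt{I}$ independent of the random vectors, then $H(\texttt{I}\mid \texttt{Q}_T)=H(\texttt{I})$. (2) Universal robustness and optimality: for every $\mu$ with $k\le\mu\le n$ and every set $L\subseteq\{1,\dots,n\}$ with $|L|=\mu$, the user can compute all $\alpha'$ parts of $f_i$ from the responses of the servers in $L$ to their first $\alpha'/(\mu-t)$ sub-queries only. Hence, when waiting for any $\mu$ servers, the user downloads $\mu\alpha'/(\mu-t)$ symbols to retrieve the $\alpha'$ symbols of the file, i.e. the scheme achieves rate $$\frac{\alpha'}{\mu\,\alpha'/(\mu-t)}=1-\frac{t}{\mu}=C(t,\mu)$$ simultaneously for all $\mu\in\{k,\dots,n\}$.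
   Context: Setting: $m$ files are replicated on $n$ servers; a user wants file $f_i$ while any $t$ colluding servers must learn nothing about $i$. All arithmetic is over a finite field $GF(q)$ with $q>n$. Parameters: for $j=1,\dots,n-k+1$ let $\mu_j=n-j+1$ and $\alpha_j=\mu_j-t$ (so $\alpha_{j-1}-\alpha_j=1$; set $\alpha_0=1$). Let $\alpha=\mathrm{lcm}(\alpha_1,\dots,\alpha_{n-k})$ (with $\alpha=1$ if $n=k$) and $\alpha'=(k-t)\alpha$. Each file is split into $\alpha'$ symbols and the data is the vector $\mathbf{x}=[x_1,\dots,x_{\alpha' m}]^T\in GF(q)^{\alpha' m}$ with $f_i=[x_i,x_{m+i},\dots,x_{(\alpha'-1)m+i}]$. Let $\mathbf{e}_p$ be the $p$-th standard basis vector of $GF(q)^{\alpha' m}$ and $\mathbf{e}'_j=\mathbf{e}_{(j-1)m+i}$, so $f_i=[\mathbf{e}_1'^T\mathbf{x},\dots,\mathbf{e}_{\alpha'}'^T\mathbf{x}]$. Construction of the queries: the user draws i.i.d. random vectors uniformly from $GF(q)^{\alpha' m}$, independent of $i$. All matrices below have entries that are vectors in $GF(q)^{\alpha' m}$. Let $\mathcal{E}$ be the $\alpha_1\times(\alpha'/\alpha_1)$ matrix containing $\mathbf{e}'_1,\dots,\mathbf{e}'_{\alpha'}$ (filled column by column). For $j=1,\dots,n-k+1$ let $\mathcal{R}_j$ be a $t\times \alpha'/(\alpha_{j-1}\alpha_j)$ matrix of fresh random vectors (distinct entries are distinct independent random vectors). Let $\mathcal{M}_1=\begin{bmatrix}\mathcal{E}\\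 \mathcal{R}_1\end{bmatrix}$ (an $n\times \alpha'/\alpha_1$ matrix). For $l=1,\dots,n-k$, let $\mathcal{D}_l$ be the $\alpha_{l+1}\times \alpha'/(\alpha_l\alpha_{l+1})$ matrix obtained by taking the $(n-l+1)$-th row of the concatenation $[\mathcal{M}_1\ \mathcal{M}_2\ \cdots\ \mathcal{M}_l]$ (which has exactly $\alpha'/\alpha_l$ entries) and writing its entries into $\mathcal{D}_l$ column by column. For $j=2,\dots,n-k+1$ let $\mathcal{M}_j=\begin{bmatrix}\mathcal{D}_{j-1}\\ \mathcal{R}_j\\ \mathbf{0}\end{bmatrix}$, where $\mathbf{0}$ is a $(j-1)\times \alpha'/(\alpha_{j-1}\alpha_j)$ block of zero vectors, so that $\mathcal{M}_j$ has $n$ rows. Let $\mathcal{M}=[\mathcal{M}_1\ \mathcal{M}_2\ \cdots\ \mathcal{M}_{n-k+1}]$, an $n\times\alpha$ matrix. Let $\mathcal{V}$ be the $n\times n$ Vandermonde matrix $\mathcal{V}_{l,c}=a_l^{c-1}$ with $a_1,\dots,a_n$ distinct nonzero elements of $GF(q)$. The query matrix is $\mathcal{Q}=\mathcal{V}\mathcal{M}$; server $l$ receives the query $\mathbf{q}_l$ = row $l$ of $\mathcal{Q}$, consisting of $\alpha$ sub-queries $\mathbf{q}_{l,1},\dots,\mathbf{q}_{l,\alpha}\in GF(q)^{\alpha' m}$, and answers sub-query $c$ with the symbol $\mathbf{q}_{l,c}^T\mathbf{x}$. The rate of retrieval is the number of file symbols divided by the number of downloaded symbols; $C(t,\mu)=1-t/\mu$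 is the asymptotic capacity of PIR with $t$ colluding servers and $\mu$ responding servers. *)

theory Defs
  imports "HOL-Probability.Probability_Mass_Function"
begin

text \<open>Staircase-PIR scheme. All indices are 1-based as in the paper.
  Vectors of GF(q)^N are functions nat => 'a supported on {1..N}.\<close>

type_synonym 'a vec = "nat \<Rightarrow> 'a"

definition vecs :: "nat \<Rightarrow> ('a::zero) vec set" where
  "vecs N = {v. \<forall>p. (p < 1 \<or> N < p) \<longrightarrow> v p = 0}"

text \<open>alpha_j = mu_j - t = n - j + 1 - t for j >= 1, and alpha_0 = 1.\<close>
definition alph :: "nat \<Rightarrow> nat \<Rightarrow> nat \<Rightarrow> nat" where
  "alph n t j = (if j = 0 then 1 else n + 1 - j - t)"

definition alpha :: "nat \<Rightarrow> nat \<Rightarrow> nat \<Rightarrow> nat" where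
  "alpha n k t = Lcm (alph n t ` {1..n - k})"

definition alpha' :: "nat \<Rightarrow> nat \<Rightarrow> nat \<Rightarrow> nat" where
  "alpha' n k t = (k - t) * alpha n k t"

text \<open>number of columns of M_j\<close>
definition blkw :: "nat \<Rightarrow> nat \<Rightarrow> nat \<Rightarrow> nat \<Rightarrow> nat" where
  "blkw n k t j = alpha' n k t div (alph n t (j - 1) * alph n t j)"

text \<open>number of columns of [M_1 ... M_l]\<close>
definition catw :: "nat \<Rightarrow> nat \<Rightarrow> nat \<Rightarrow> nat \<Rightarrow> nat" where
  "catw n k t l = (if l = 0 then 0 else alpha' n k t div alph n t l)"

definition ev :: "nat \<Rightarrow> ('a::{zero,one}) vec" where
  "ev p = (\<lambda>q. if q = p then 1 else 0)"

text \<open>entry (r,c) of the matrix E: e'_j with j = (c-1) alpha_1 + r, e'_j = e_{(j-1)m+i}\<close>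
definition Eent :: "nat \<Rightarrow> nat \<Rightarrow> nat \<Rightarrow> nat \<Rightarrow> nat \<Rightarrow> nat \<Rightarrow> ('a::{zero,one}) vec" where
  "Eent n t m i r c = ev (((c - 1) * alph n t 1 + r - 1) * m + i)"

text \<open>Entry (r,c) of block M_j, given the concatenation C = [M_1 ... M_{j-1}]
  (as a function row => column => vector) and the random vectors rho
  (rho j s c = entry (s,c) of R_j).\<close>
definition Mblk :: "nat \<Rightarrow> nat \<Rightarrow> nat \<Rightarrow> nat \<Rightarrow> nat \<Rightarrow> (nat \<Rightarrow> nat \<Rightarrow> nat \<Rightarrow> ('a::{zero,one}) vec)
    \<Rightarrow> (nat \<Rightarrow> nat \<Rightarrow> 'a vec) \<Rightarrow> nat \<Rightarrow> nat \<Rightarrow> nat \<Rightarrow> 'a vec" where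
  "Mblk n k t m i \<rho> C j r c =
    (if 1 \<le> r \<and> r \<le> n \<and> 1 \<le> c \<and> c \<le> blkw n k t j then
       (if j = 1 then
          (if r \<le> alph n t 1 then Eent n t m i r c else \<rho> 1 (r - alph n t 1) c)
        else
          (if r \<le> alph n t j then C (n + 2 - j) ((c - 1) * alph n t j + r)
           else if r \<le> alph n t j + t then \<rho> j (r - alph n t j) c
           else (\<lambda>_. 0)))
     else (\<lambda>_. 0))"

text \<open>cat l = [M_1 ... M_l]; the row of cat (j-1) used in Mblk is read in
  column order, which is exactly D_{j-1} filled column by column.\<close>
primrec cat :: "nat \<Rightarrow> nat \<Rightarrow> nat \<Rightarrow> nat \<Rightarrow> nat \<Rightarrow> (nat \<Rightarrow> nat \<Rightarrow> nat \<Rightarrow> ('a::{zero,one}) vec)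
    \<Rightarrow> nat \<Rightarrow> nat \<Rightarrow> nat \<Rightarrow> 'a vec" where
  "cat n k t m i \<rho> 0 = (\<lambda>r c. (\<lambda>_. 0))"
| "cat n k t m i \<rho> (Suc l) = (\<lambda>r c.
      if c \<le> catw n k t l then cat n k t m i \<rho> l r c
      else Mblk n k t m i \<rho> (cat n k t m i \<rho> l) (Suc l) r (c - catw n k t l))"

definition Mmat :: "nat \<Rightarrow> nat \<Rightarrow> nat \<Rightarrow> nat \<Rightarrow> nat \<Rightarrow> (nat \<Rightarrow> nat \<Rightarrow> nat \<Rightarrow> ('a::{zero,one}) vec)
    \<Rightarrow> nat \<Rightarrow> nat \<Rightarrow> 'a vec" where
  "Mmat n k t m i \<rho> = cat n k t m i \<rho> (n - k + 1)"

definition query :: "nat \<Rightarrow> nat \<Rightarrow> nat \<Rightarrow> nat \<Rightarrow> nat \<Rightarrow> (nat \<Rightarrow> 'a::field)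
    \<Rightarrow> (nat \<Rightarrow> nat \<Rightarrow> nat \<Rightarrow> 'a vec) \<Rightarrow> nat \<Rightarrow> nat \<Rightarrow> 'a vec" where
  "query n k t m i a \<rho> l c = (\<lambda>p. \<Sum>r = 1..n. a l ^ (r - 1) * Mmat n k t m i \<rho> r c p)"

definition answer :: "nat \<Rightarrow> nat \<Rightarrow> nat \<Rightarrow> nat \<Rightarrow> nat \<Rightarrow> (nat \<Rightarrow> 'a::field)
    \<Rightarrow> (nat \<Rightarrow> nat \<Rightarrow> nat \<Rightarrow> 'a vec) \<Rightarrow> nat \<Rightarrow> nat \<Rightarrow> 'a vec \<Rightarrow> 'a" where
  "answer n k t m i a \<rho> l c x = (\<Sum>p = 1..alpha' n k t * m. query n k t m i a \<rho> l c p * x p)"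

text \<open>the space of all choices of the random vectors: rho j s c is entry (s,c)
  of R_j for 1<=j<=n-k+1, 1<=s<=t, 1<=c<=blkw j; all other values are fixed to 0.
  The uniform distribution on this set makes all random vectors i.i.d. uniform.\<close>
definition rand_space :: "nat \<Rightarrow> nat \<Rightarrow> nat \<Rightarrow> nat \<Rightarrow> (nat \<Rightarrow> nat \<Rightarrow> nat \<Rightarrow> ('a::zero) vec) set" where
  "rand_space n k t m = {\<rho>. \<forall>j s c. \<rho> j s c \<in> vecs (alpha' n k t * m) \<and>
      (\<not> (1 \<le> j \<and> j \<le> n - k + 1 \<and> 1 \<le> s \<and> s \<le> t \<and> 1 \<le> c \<and> c \<le> blkw n k t j)
         \<longrightarrow> \<rho> j s c = (\<lambda>_. 0))}"

end

theory Submission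
  imports Defs "HOL-Computational_Algebra.Polynomial" "HOL-Probability.Product_PMF"
begin

lemma vander:
  fixes a :: "nat \<Rightarrow> 'a::field" and y :: "nat \<Rightarrow> 'a"
  assumes "finite L" "card L = \<mu>" "inj_on a L"
    and "\<forall>l\<in>L. (\<Sum>r=1..\<mu>. a l ^ (r-1) * y r) = 0"
  shows "\<forall>r\<in>{1..\<mu>}. y r = 0"
proof -
  define p where "p = (\<Sum>r=1..\<mu>. monom (y r) (r-1))"
  have pv: "poly p x = (\<Sum>r=1..\<mu>. x ^ (r-1) * y r)" for x
    unfolding p_def poly_sum by (simp add: poly_monom mult.commute)
  have p0: "p = 0"
  proof (rule ccontr)
    assume "p \<noteq> 0"
    hence "card {x. poly p x = 0} \<le> degree p" by (rule card_poly_roots_bound)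
    moreover have "degree p \<le> \<mu> - 1" unfolding p_def
      by (rule degree_sum_le) (auto intro: order.trans[OF degree_monom_le])
    moreover have "a ` L \<subseteq> {x. poly p x = 0}" using assms(4) pv by auto
    hence "card (a ` L) \<le> card {x. poly p x = 0}"
      using \<open>p \<noteq> 0\<close> poly_roots_finite by (intro card_mono) auto
    moreover have "card (a ` L) = \<mu>" using assms card_image by metis
    ultimately have "\<mu> \<le> \<mu> - 1" by linarith
    hence "\<mu> = 0" by simp
    hence "p = 0" unfolding p_def by simp
    thus False using \<open>p \<noteq> 0\<close> by simp
  qed
  show ?thesis
  proof
    fix r assume r: "r \<in> {1..\<mu>}"
    have "coeff p (r-1) = (\<Sum>r'=1..\<mu>. if r' = r then y r' else 0)"
      unfolding p_def coeff_sum coeff_monom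
      by (intro sum.cong) (use r in auto)
    also have "\<dots> = y r" using r by simp
    finally show "y r = 0" using p0 by simp
  qed
qed

locale stair = fixes n k t :: nat
  assumes t1: "1 \<le> t" and tk: "t < k" and kn: "k \<le> n"
begin

abbreviation "J \<equiv> n - k + 1"
abbreviation "al \<equiv> alph n t"
abbreviation "AL \<equiv> alpha n k t"
abbreviation "AL' \<equiv> alpha' n k t"
abbreviation "bw \<equiv> blkw n k t"
abbreviation "cw \<equiv> catw n k t"

lemma al_val: "1 \<le> j \<Longrightarrow> al j = n + 1 - j - t" by (simp add: alph_def)
lemma al_pos: "1 \<le> j \<Longrightarrow> j \<le> J \<Longrightarrow> 1 \<le> al j" using tk kn by (simp add: alph_def)
lemma al_pos0: "j \<le> J \<Longrightarrow> 1 \<le> al j" using tk kn by (auto simp: alph_def)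
lemma al_pred: "2 \<le> j \<Longrightarrow> j \<le> J \<Longrightarrow> al (j-1) = al j + 1"
  using tk kn by (simp add: alph_def)
lemma al_last: "al J = k - t" using tk kn by (simp add: alph_def)
lemma al_rows: "1 \<le> j \<Longrightarrow> j \<le> J \<Longrightarrow> al j + t = n + 1 - j"
  using tk kn by (simp add: alph_def)

lemma AL_pos: "AL > 0"
proof -
  have "\<forall>x\<in>al ` {1..n-k}. x \<noteq> 0" using al_pos by force
  hence "0 \<notin> al ` {1..n-k}" by auto
  moreover have "finite (al ` {1..n-k})" by simp
  hence "Lcm (al ` {1..n-k}) = 0 \<longleftrightarrow> 0 \<in> al ` {1..n-k}" by (rule Lcm_0_iff)
  ultimately have "Lcm (al ` {1..n-k}) \<noteq> 0" by blast
  thus ?thesis unfolding alpha_def by (metis gr0I)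
qed

lemma cw0: "cw 0 = 0" by (simp add: catw_def)

lemma AL'_pos: "AL' > 0" using AL_pos tk by (simp add: alpha'_def)

lemma al_dvd_AL': "j \<le> J \<Longrightarrow> al j dvd AL'"
proof (cases "j = 0")
  case True thus ?thesis by (simp add: alph_def)
next
  case False
  assume j: "j \<le> J"
  show ?thesis
  proof (cases "j = J")
    case True thus ?thesis using al_last by (simp add: alpha'_def)
  next
    case False
    hence "al j dvd AL" unfolding alpha_def using j \<open>j \<noteq> 0\<close> by (intro dvd_Lcm) auto
    thus ?thesis by (simp add: alpha'_def)
  qed
qed

lemma prod_dvd: "1 \<le> j \<Longrightarrow> j \<le> J \<Longrightarrow> al (j-1) * al j dvd AL'"
proof (cases "j = 1")
  case True thus ?thesis using al_dvd_AL'[of 1] by (simp add: alph_def)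
next
  case False
  assume j: "1 \<le> j" "j \<le> J"
  hence p: "al (j-1) = Suc (al j)" using al_pred[of j] False by simp
  have "coprime (al (j-1)) (al j)" unfolding p by simp
  thus ?thesis using al_dvd_AL'[of j] al_dvd_AL'[of "j-1"] j by (intro divides_mult) auto
qed

lemma bw_prod: "1 \<le> j \<Longrightarrow> j \<le> J \<Longrightarrow> al (j-1) * al j * bw j = AL'"
  using prod_dvd by (simp add: blkw_def)

lemma cw_prod: "1 \<le> j \<Longrightarrow> j \<le> J \<Longrightarrow> cw j * al j = AL'"
  using al_dvd_AL'[of j] by (simp add: catw_def)

lemma cw_pred: "2 \<le> j \<Longrightarrow> j \<le> J \<Longrightarrow> cw (j-1) = bw j * al j"
proof -
  assume j: "2 \<le> j" "j \<le> J"
  have "cw (j-1) * al (j-1) = AL'" using cw_prod[of "j-1"] j by simp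
  also have "\<dots> = (bw j * al j) * al (j-1)" using bw_prod[of j] j by (simp add: ac_simps)
  moreover have "j - 1 \<le> J" using j by simp
  hence "al (j-1) \<noteq> 0" using al_pos0[of "j-1"] by simp
  ultimately show ?thesis by simp
qed

lemma bw1: "bw 1 * al 1 = AL'" using bw_prod[of 1] kn by (simp add: alph_def ac_simps)

lemma cw_rec: "1 \<le> j \<Longrightarrow> j \<le> J \<Longrightarrow> cw j = cw (j-1) + bw j"
proof -
  assume j: "1 \<le> j" "j \<le> J"
  have "cw j * al j = AL'" by (rule cw_prod[OF j])
  also have "\<dots> = al (j-1) * al j * bw j" using bw_prod[OF j] by simp
  finally have e: "cw j * al j = al (j-1) * al j * bw j" .
  have e2: "cw j = al (j-1) * bw j" using e al_pos[OF j] by (simp add: ac_simps)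
  show ?thesis
  proof (cases "j = 1")
    case True thus ?thesis using e2 cw0 by (simp add: alph_def)
  next
    case False
    thus ?thesis using e2 cw_pred[of j] al_pred[of j] j by (simp add: algebra_simps)
  qed
qed

lemma cw_mono: "i \<le> j \<Longrightarrow> j \<le> J \<Longrightarrow> cw i \<le> cw j"
proof (induction j)
  case 0 thus ?case by simp
next
  case (Suc j)
  show ?case
  proof (cases "i = Suc j")
    case True thus ?thesis by simp
  next
    case False
    hence "cw i \<le> cw j" using Suc by simp
    also have "\<dots> \<le> cw (Suc j)" using cw_rec[of "Suc j"] Suc by simp
    finally show ?thesis .
  qed
qed

lemma cw_last: "cw J = AL"
  using cw_prod[of J] al_last tk AL_pos by (simp add: alpha'_def)

lemma block_of:
  assumes "1 \<le> c" "c \<le> cw J"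
  obtains j where "1 \<le> j" "j \<le> J" "cw (j-1) < c" "c \<le> cw j"
proof -
  define j where "j = (LEAST j. c \<le> cw j)"
  have jl: "c \<le> cw j" unfolding j_def by (rule LeastI[of _ J]) (rule assms(2))
  have jJ: "j \<le> J" unfolding j_def by (rule Least_le) (rule assms(2))
  have j1: "j \<noteq> 0" using jl assms(1) cw0 by (cases j) auto
  have "\<not> c \<le> cw (j-1)" unfolding j_def
    by (rule not_less_Least) (use j1 in \<open>simp add: j_def\<close>)
  hence "cw (j-1) < c" by simp
  thus ?thesis using that[of j] j1 jJ jl by simp
qed

end

context stair begin

abbreviation "CT m i \<rho> \<equiv> cat n k t m i \<rho>"

lemma cat_stable:
  "l' \<le> l \<Longrightarrow> l \<le> J \<Longrightarrow> c \<le> cw l' \<Longrightarrow> cat n k t m i \<rho> l r c = cat n k t m i \<rho> l' r c"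
proof (induction l)
  case 0 thus ?case by simp
next
  case (Suc l)
  show ?case
  proof (cases "l' = Suc l")
    case True thus ?thesis by simp
  next
    case False
    hence l': "l' \<le> l" using Suc by simp
    hence "c \<le> cw l" using cw_mono[of l' l] Suc by simp
    thus ?thesis using Suc l' by simp
  qed
qed

lemma cat_blk:
  "1 \<le> j \<Longrightarrow> cw (j-1) < c \<Longrightarrow>
    cat n k t m i \<rho> j r c = Mblk n k t m i \<rho> (cat n k t m i \<rho> (j-1)) j r (c - cw (j-1))"
  by (cases j) auto

lemma Mmat_col:
  assumes "1 \<le> j" "j \<le> J" "cw (j-1) < c" "c \<le> cw j"
  shows "Mmat n k t m i \<rho> r c = Mblk n k t m i \<rho> (cat n k t m i \<rho> (j-1)) j r (c - cw (j-1))"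
proof -
  have "Mmat n k t m i \<rho> r c = cat n k t m i \<rho> j r c"
    unfolding Mmat_def using assms by (intro cat_stable) auto
  thus ?thesis using cat_blk assms by simp
qed

lemma Mmat_stable:
  assumes "j \<le> J" "c \<le> cw j"
  shows "Mmat n k t m i \<rho> r c = cat n k t m i \<rho> j r c"
  unfolding Mmat_def using assms by (intro cat_stable) auto

lemma Mblk_cong: "\<rho> j = \<rho>' j \<Longrightarrow> Mblk n k t m i \<rho> C j = Mblk n k t m i \<rho>' C j"
  by (cases "j = 1") (simp_all add: Mblk_def fun_eq_iff)

lemma cat_dep:
  "(\<forall>j'. 1 \<le> j' \<and> j' \<le> l \<longrightarrow> \<rho> j' = \<rho>' j') \<Longrightarrow> cat n k t m i \<rho> l = cat n k t m i \<rho>' l"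
proof (induction l)
  case 0 thus ?case by simp
next
  case (Suc l)
  hence IH: "cat n k t m i \<rho> l = cat n k t m i \<rho>' l" by simp
  have "\<rho> (Suc l) = \<rho>' (Suc l)" using Suc.prems by simp
  thus ?case using Mblk_cong[of \<rho> "Suc l" \<rho>'] by (simp add: IH fun_eq_iff)
qed

lemma eidx:
  assumes "1 \<le> c" "c \<le> bw 1" "1 \<le> r" "r \<le> al 1"
  shows "1 \<le> (c-1) * al 1 + r \<and> (c-1) * al 1 + r \<le> AL'"
proof -
  have "(c-1) * al 1 + r \<le> (c-1) * al 1 + al 1" using assms by simp
  also have "\<dots> = c * al 1" using assms by (cases c) auto
  also have "\<dots> \<le> bw 1 * al 1" using assms by simp
  finally show ?thesis using assms bw1 by simp
qed

lemma idx_range: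
  assumes "1 \<le> q" "q \<le> AL'" "1 \<le> i" "i \<le> m"
  shows "1 \<le> (q-1)*m + i \<and> (q-1)*m + i \<le> AL' * m"
proof -
  have "(q-1)*m + i \<le> (q-1)*m + m" using assms by simp
  also have "\<dots> = q * m" using assms by (cases q) auto
  also have "\<dots> \<le> AL' * m" using assms by simp
  finally show ?thesis using assms by simp
qed

definition rspace where "rspace m = (rand_space n k t m :: (nat \<Rightarrow> nat \<Rightarrow> nat \<Rightarrow> ('b::zero) vec) set)"

lemma cat_vecs:
  assumes "\<rho> \<in> rand_space n k t m" "1 \<le> i" "i \<le> m" "l \<le> J"
  shows "cat n k t m i \<rho> l r c \<in> vecs (AL' * m)"
  using assms(4)
proof (induction l arbitrary: r c)
  case 0 thus ?case by (simp add: vecs_def)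
next
  case (Suc l)
  have rv: "\<rho> j s c \<in> vecs (AL' * m)" for j s c using assms(1) by (simp add: rand_space_def)
  have ev: "Eent n t m i r c' \<in> vecs (AL' * m)" if "0 < r" "r \<le> al 1" "0 < c'" "c' \<le> bw 1" for r c'
  proof -
    have "1 \<le> (c'-1) * al 1 + r \<and> (c'-1) * al 1 + r \<le> AL'" using eidx[of c' r] that by simp
    hence "1 \<le> ((c'-1) * al 1 + r - 1)*m + i \<and> ((c'-1) * al 1 + r - 1)*m + i \<le> AL' * m"
      using idx_range assms by blast
    thus ?thesis unfolding Eent_def vecs_def ev_def by auto
  qed
  show ?case
  proof (cases "c \<le> cw l")
    case True thus ?thesis using Suc by simp
  next
    case False
    have z: "(\<lambda>_. 0) \<in> vecs (AL' * m)" by (simp add: vecs_def)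
    show ?thesis using False Suc rv ev z by (auto simp: Mblk_def cw0 Suc_le_eq)
  qed
qed

end

context stair begin

lemma query_split:
  fixes a :: "nat \<Rightarrow> 'a::field"
  assumes j: "1 \<le> j" "j \<le> J" and c': "1 \<le> c'" "c' \<le> bw j"
  shows "query n k t m i a \<rho> l (cw (j-1) + c') p =
    (\<Sum>r=1..al j. a l ^ (r-1) * Mmat n k t m i \<rho> r (cw (j-1) + c') p)
    + a l ^ al j * (\<Sum>s=1..t. a l ^ (s-1) * \<rho> j s c' p)"
proof -
  define c where "c = cw (j-1) + c'"
  define f where "f r = a l ^ (r-1) * Mmat n k t m i \<rho> r c p" for r
  have cb: "cw (j-1) < c" "c \<le> cw j" using c' cw_rec[OF j] unfolding c_def by auto
  have M: "Mmat n k t m i \<rho> r c = Mblk n k t m i \<rho> (cat n k t m i \<rho> (j-1)) j r c'" for r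
    using Mmat_col[OF j cb] unfolding c_def by simp
  have rows: "al j + t = n + 1 - j" by (rule al_rows[OF j])
  have ap: "1 \<le> al j" by (rule al_pos[OF j])
  have f0: "f r = 0" if "al j + t < r" "r \<le> n" for r
  proof -
    have "j \<noteq> 1" using that rows by auto
    thus ?thesis unfolding f_def M using that c' by (simp add: Mblk_def)
  qed
  have fr: "f (al j + s) = a l ^ al j * (a l ^ (s-1) * \<rho> j s c' p)" if "1 \<le> s" "s \<le> t" for s
  proof -
    have "Mmat n k t m i \<rho> (al j + s) c = \<rho> j s c'"
      unfolding M using that c' rows j by (auto simp: Mblk_def)
    moreover have "al j + s - 1 = al j + (s - 1)" using that by simp
    ultimately show ?thesis unfolding f_def by (simp add: power_add)
  qed
  have "query n k t m i a \<rho> l c p = (\<Sum>r=1..n. f r)" unfolding query_def f_def by simp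
  also have "\<dots> = (\<Sum>r=1..al j + t. f r) + (\<Sum>r=al j + t + 1..al j + t + (n - (al j + t)). f r)"
    using rows j by (subst sum.ub_add_nat[symmetric]) auto
  also have "(\<Sum>r=al j + t + 1..al j + t + (n - (al j + t)). f r) = 0"
    by (intro sum.neutral) (auto intro!: f0)
  also have "(\<Sum>r=1..al j + t. f r) = (\<Sum>r=1..al j. f r) + (\<Sum>r=al j + 1..al j + t. f r)"
    by (rule sum.ub_add_nat) simp
  also have "(\<Sum>r=al j + 1..al j + t. f r) = (\<Sum>s=1..t. f (s + al j))"
    using sum.shift_bounds_cl_nat_ivl[of f 1 "al j" t] by (simp add: add.commute)
  also have "\<dots> = (\<Sum>s=1..t. a l ^ al j * (a l ^ (s-1) * \<rho> j s c' p))"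
    by (intro sum.cong) (use fr in \<open>auto simp: add.commute\<close>)
  also have "\<dots> = a l ^ al j * (\<Sum>s=1..t. a l ^ (s-1) * \<rho> j s c' p)"
    by (simp add: sum_distrib_left)
  finally show ?thesis unfolding c_def f_def by simp
qed

end

lemma vecs_eq: "vecs N = PiE_dflt {1..N} 0 (\<lambda>_. UNIV)"
  by (auto simp: vecs_def PiE_dflt_def not_le[symmetric])

lemma finite_vecs: "finite (vecs N :: ('a::{finite,zero}) vec set)"
  unfolding vecs_eq by (intro finite_PiE_dflt) auto

lemma zero_vecs: "(\<lambda>_. 0) \<in> vecs N" by (simp add: vecs_def)

context stair begin

lemma top_eq: "r \<le> al j \<Longrightarrow> Mblk n k t m i \<rho> C j r c = Mblk n k t m i \<rho>' C j r c"
  by (cases "j = 1") (simp_all add: Mblk_def)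

lemma priv_inj:
  fixes a :: "nat \<Rightarrow> 'a::{finite,field}"
  assumes T: "T \<subseteq> {1..n}" "card T = t" and a: "inj_on a {1..n}" "\<forall>l\<in>{1..n}. a l \<noteq> 0"
  shows "inj_on (\<lambda>\<rho>. \<lambda>l c. if l \<in> T \<and> c \<in> {1..AL} then query n k t m i a \<rho> l c else (\<lambda>_. 0))
           (rand_space n k t m)"
proof (rule inj_onI)
  fix \<rho> \<rho>' :: "nat \<Rightarrow> nat \<Rightarrow> nat \<Rightarrow> 'a vec"
  assume r: "\<rho> \<in> rand_space n k t m" "\<rho>' \<in> rand_space n k t m"
  assume eq: "(\<lambda>l c. if l \<in> T \<and> c \<in> {1..AL} then query n k t m i a \<rho> l c else (\<lambda>_. 0)) =
     (\<lambda>l c. if l \<in> T \<and> c \<in> {1..AL} then query n k t m i a \<rho>' l c else (\<lambda>_. 0))"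
  have qe: "query n k t m i a \<rho> l c = query n k t m i a \<rho>' l c" if "l \<in> T" "1 \<le> c" "c \<le> AL" for l c
    using fun_cong[OF fun_cong[OF eq, of l], of c] that by simp
  have fT: "finite T" using T finite_subset by blast
  have injT: "inj_on a T" using a T inj_on_subset by blast
  have "\<forall>j. \<rho> j = \<rho>' j"
  proof
    fix j show "\<rho> j = \<rho>' j"
    proof (induction j rule: less_induct)
      case (less j)
      show ?case
      proof (cases "1 \<le> j \<and> j \<le> J")
        case False
        thus ?thesis using r by (auto simp: rand_space_def fun_eq_iff)
      next
        case True
        hence j: "1 \<le> j" "j \<le> J" by auto
        have catq: "cat n k t m i \<rho> (j-1) = cat n k t m i \<rho>' (j-1)"
          by (rule cat_dep) (use less j in auto)
        show ?thesis
        proof (intro ext)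
          fix s c' p
          show "\<rho> j s c' p = \<rho>' j s c' p"
          proof (cases "1 \<le> s \<and> s \<le> t \<and> 1 \<le> c' \<and> c' \<le> bw j")
            case False
            thus ?thesis using r j by (auto simp: rand_space_def)
          next
            case True
            hence s: "1 \<le> s" "s \<le> t" and c': "1 \<le> c'" "c' \<le> bw j" by auto
            define c where "c = cw (j-1) + c'"
            have cb: "cw (j-1) < c" "c \<le> cw j" using c' cw_rec[OF j] unfolding c_def by auto
            have cA: "1 \<le> c" "c \<le> AL" using cb cw_mono[of j J] cw_last j by auto
            have topq: "Mmat n k t m i \<rho> r c = Mmat n k t m i \<rho>' r c" if "r \<le> al j" for r
              unfolding Mmat_col[OF j cb, of m i] catq by (rule top_eq[OF that])
            define y where "y s = \<rho> j s c' p - \<rho>' j s c' p" for s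
            have "\<forall>l\<in>T. (\<Sum>s=1..t. a l ^ (s-1) * y s) = 0"
            proof
              fix l assume l: "l \<in> T"
              have "query n k t m i a \<rho> l c p = query n k t m i a \<rho>' l c p" using qe[OF l cA] by simp
              hence "a l ^ al j * (\<Sum>s=1..t. a l ^ (s-1) * \<rho> j s c' p) =
                     a l ^ al j * (\<Sum>s=1..t. a l ^ (s-1) * \<rho>' j s c' p)"
                unfolding c_def query_split[OF j c'] using topq unfolding c_def by simp
              moreover have "a l \<noteq> 0" using a T l by auto
              ultimately have "(\<Sum>s=1..t. a l ^ (s-1) * \<rho> j s c' p) = (\<Sum>s=1..t. a l ^ (s-1) * \<rho>' j s c' p)"
                by simp
              thus "(\<Sum>s=1..t. a l ^ (s-1) * y s) = 0"
                unfolding y_def by (simp add: right_diff_distrib sum_subtractf)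
            qed
            hence "\<forall>s\<in>{1..t}. y s = 0" by (intro vander[OF fT T(2) injT])
            thus ?thesis using s unfolding y_def by simp
          qed
        qed
      qed
    qed
  qed
  thus "\<rho> = \<rho>'" by (simp add: fun_eq_iff)
qed

end

context stair begin

lemma sum_bw: "l \<le> J \<Longrightarrow> (\<Sum>j=1..l. bw j) = cw l"
proof (induction l)
  case 0 thus ?case by (simp add: cw0)
next
  case (Suc l)
  thus ?case using cw_rec[of "Suc l"] by simp
qed

definition Idx where "Idx = {(j,s,c). 1 \<le> j \<and> j \<le> J \<and> 1 \<le> s \<and> s \<le> t \<and> 1 \<le> c \<and> c \<le> bw j}"

lemma Idx_Sigma: "Idx = Sigma {1..J} (\<lambda>j. {1..t} \<times> {1..bw j})"
  by (auto simp: Idx_def)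

lemma card_Idx: "card Idx = t * AL"
proof -
  have "card Idx = (\<Sum>j=1..J. card ({1..t} \<times> {1..bw j}))"
    unfolding Idx_Sigma by (subst card_SigmaI) auto
  also have "\<dots> = (\<Sum>j=1..J. t * bw j)" by (simp add: card_cartesian_product)
  also have "\<dots> = t * (\<Sum>j=1..J. bw j)" by (rule sum_distrib_left[symmetric])
  also have "\<dots> = t * cw J" using sum_bw[of J] by simp
  finally show ?thesis using cw_last by simp
qed

lemma finite_Idx: "finite Idx" unfolding Idx_Sigma by auto

lemma rand_image:
  "(\<lambda>\<rho>. \<lambda>(j,s,c). \<rho> j s c) ` (rand_space n k t m :: (nat \<Rightarrow> nat \<Rightarrow> nat \<Rightarrow> ('a::zero) vec) set)
   = PiE_dflt Idx (\<lambda>_. 0) (\<lambda>_. vecs (AL' * m))"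
proof (intro equalityI subsetI)
  fix g assume "g \<in> (\<lambda>\<rho>. \<lambda>(j,s,c). \<rho> j s c) ` (rand_space n k t m :: (nat \<Rightarrow> nat \<Rightarrow> nat \<Rightarrow> 'a vec) set)"
  thus "g \<in> PiE_dflt Idx (\<lambda>_. 0) (\<lambda>_. vecs (AL' * m))"
    by (auto simp: PiE_dflt_def rand_space_def Idx_def)
next
  fix g :: "nat \<times> nat \<times> nat \<Rightarrow> 'a vec"
  assume g: "g \<in> PiE_dflt Idx (\<lambda>_. 0) (\<lambda>_. vecs (AL' * m))"
  have gv: "\<forall>j s c. g (j,s,c) \<in> vecs (AL' * m)"
  proof (intro allI)
    fix j s c show "g (j,s,c) \<in> vecs (AL' * m)"
      by (cases "(j,s,c) \<in> Idx") (use g zero_vecs in \<open>auto simp: PiE_dflt_def\<close>)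
  qed
  have "(\<lambda>j s c. g (j,s,c)) \<in> rand_space n k t m"
    using g gv unfolding PiE_dflt_def rand_space_def Idx_def by auto
  thus "g \<in> (\<lambda>\<rho>. \<lambda>(j,s,c). \<rho> j s c) ` rand_space n k t m"
    by (rule rev_image_eqI) auto
qed

lemma inj_U: "inj (\<lambda>\<rho>. \<lambda>(j::nat,s::nat,c::nat). (\<rho> j s c :: 'b))"
proof (rule injI)
  fix x y :: "nat \<Rightarrow> nat \<Rightarrow> nat \<Rightarrow> 'b"
  assume e: "(\<lambda>(j,s,c). x j s c) = (\<lambda>(j,s,c). y j s c)"
  show "x = y"
  proof (intro ext)
    fix j s c show "x j s c = y j s c" using fun_cong[OF e, of "(j,s,c)"] by simp
  qed
qed

lemma rand_props:
  "finite (rand_space n k t m :: (nat \<Rightarrow> nat \<Rightarrow> nat \<Rightarrow> ('a::{zero,finite}) vec) set) \<and>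
   rand_space n k t m \<noteq> ({} :: (nat \<Rightarrow> nat \<Rightarrow> nat \<Rightarrow> 'a vec) set) \<and>
   card (rand_space n k t m :: (nat \<Rightarrow> nat \<Rightarrow> nat \<Rightarrow> 'a vec) set) = card (vecs (AL' * m) :: 'a vec set) ^ (t * AL)"
proof -
  let ?U = "\<lambda>\<rho>. \<lambda>(j::nat,s::nat,c::nat). (\<rho> j s c :: 'a vec)"
  let ?R = "rand_space n k t m :: (nat \<Rightarrow> nat \<Rightarrow> nat \<Rightarrow> 'a vec) set"
  have inj: "inj_on ?U ?R" using inj_U by (rule inj_on_subset) simp
  have fin: "finite (?U ` ?R)" unfolding rand_image
    by (intro finite_PiE_dflt finite_Idx finite_vecs)
  have "finite ?R" using fin inj finite_image_iff by blast
  moreover have "(\<lambda>_ _ _. (\<lambda>_. 0)) \<in> ?R" by (simp add: rand_space_def zero_vecs)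
  moreover have "card ?R = card (?U ` ?R)" using inj card_image by metis
  hence "card ?R = card (vecs (AL' * m) :: 'a vec set) ^ (t * AL)"
    unfolding rand_image by (simp add: card_PiE_dflt finite_Idx finite_vecs card_Idx)
  ultimately show ?thesis by blast
qed

definition Tg :: "nat set \<Rightarrow> nat \<Rightarrow> (nat \<Rightarrow> nat \<Rightarrow> ('b::zero) vec) set" where
  "Tg T m = {Q. \<forall>l c. (l \<in> T \<and> c \<in> {1..AL} \<longrightarrow> Q l c \<in> vecs (AL' * m)) \<and>
                     (\<not> (l \<in> T \<and> c \<in> {1..AL}) \<longrightarrow> Q l c = (\<lambda>_. 0))}"

lemma Tg_image: "case_prod ` (Tg T m :: (nat \<Rightarrow> nat \<Rightarrow> ('b::zero) vec) set) =
    PiE_dflt (T \<times> {1..AL}) (\<lambda>_. 0) (\<lambda>_. vecs (AL' * m))"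
proof (intro equalityI subsetI)
  fix g assume "g \<in> case_prod ` (Tg T m :: (nat \<Rightarrow> nat \<Rightarrow> 'b vec) set)"
  thus "g \<in> PiE_dflt (T \<times> {1..AL}) (\<lambda>_. 0) (\<lambda>_. vecs (AL' * m))"
    by (auto simp: PiE_dflt_def Tg_def)
next
  fix g :: "nat \<times> nat \<Rightarrow> 'b vec"
  assume g: "g \<in> PiE_dflt (T \<times> {1..AL}) (\<lambda>_. 0) (\<lambda>_. vecs (AL' * m))"
  have "curry g \<in> Tg T m" using g unfolding PiE_dflt_def Tg_def by auto
  moreover have "g = case_prod (curry g)" by simp
  ultimately show "g \<in> case_prod ` Tg T m" by blast
qed

lemma Tg_props:
  assumes "finite T" "card T = t"
  shows "finite (Tg T m :: (nat \<Rightarrow> nat \<Rightarrow> ('a::{zero,finite}) vec) set) \<and>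
   card (Tg T m :: (nat \<Rightarrow> nat \<Rightarrow> 'a vec) set) = card (vecs (AL' * m) :: 'a vec set) ^ (t * AL)"
proof -
  let ?R = "Tg T m :: (nat \<Rightarrow> nat \<Rightarrow> 'a vec) set"
  have inj: "inj_on case_prod ?R" by (rule inj_on_subset[of _ UNIV]) (auto intro: injI simp: fun_eq_iff)
  have fin: "finite (case_prod ` ?R)" unfolding Tg_image
    using assms by (intro finite_PiE_dflt finite_vecs) auto
  have "finite ?R" using fin inj finite_image_iff by blast
  moreover have "card ?R = card (case_prod ` ?R)" using inj card_image by metis
  hence "card ?R = card (vecs (AL' * m) :: 'a vec set) ^ (t * AL)"
    unfolding Tg_image using assms by (simp add: card_PiE_dflt finite_vecs card_cartesian_product)
  ultimately show ?thesis by blast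
qed

lemma query_vecs:
  fixes a :: "nat \<Rightarrow> 'a::field"
  assumes "\<rho> \<in> rand_space n k t m" "1 \<le> i" "i \<le> m"
  shows "query n k t m i a \<rho> l c \<in> vecs (AL' * m)"
proof -
  have "Mmat n k t m i \<rho> r c \<in> vecs (AL' * m)" for r
    unfolding Mmat_def by (rule cat_vecs[OF assms]) simp
  thus ?thesis by (simp add: vecs_def query_def)
qed

lemma privacy:
  fixes a :: "nat \<Rightarrow> 'a::{finite,field}"
  assumes T: "T \<subseteq> {1..n}" "card T = t" and a: "inj_on a {1..n}" "\<forall>l\<in>{1..n}. a l \<noteq> 0"
    and i: "1 \<le> i" "i \<le> m"
  shows "map_pmf (\<lambda>\<rho>. \<lambda>l c. if l \<in> T \<and> c \<in> {1..AL} then query n k t m i a \<rho> l c else (\<lambda>_. 0))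
                (pmf_of_set (rand_space n k t m)) = pmf_of_set (Tg T m)"
proof -
  let ?F = "\<lambda>\<rho>. \<lambda>l c. if l \<in> T \<and> c \<in> {1..AL} then query n k t m i a \<rho> l c else (\<lambda>_. 0)"
  let ?R = "rand_space n k t m :: (nat \<Rightarrow> nat \<Rightarrow> nat \<Rightarrow> 'a vec) set"
  have inj: "inj_on ?F ?R" by (rule priv_inj[OF T a])
  have R: "finite ?R" "?R \<noteq> {}" "card ?R = card (vecs (AL' * m) :: 'a vec set) ^ (t * AL)"
    using rand_props by blast+
  have fT: "finite T" using T finite_subset by blast
  have Tp: "finite (Tg T m :: (nat \<Rightarrow> nat \<Rightarrow> 'a vec) set)"
     "card (Tg T m :: (nat \<Rightarrow> nat \<Rightarrow> 'a vec) set) = card (vecs (AL' * m) :: 'a vec set) ^ (t * AL)"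
    using Tg_props[OF fT T(2)] by blast+
  have sub: "?F ` ?R \<subseteq> Tg T m"
    using query_vecs i by (auto simp: Tg_def)
  have "card (?F ` ?R) = card (Tg T m :: (nat \<Rightarrow> nat \<Rightarrow> 'a vec) set)"
    using card_image[OF inj] R Tp by simp
  hence "?F ` ?R = Tg T m" using card_subset_eq[OF Tp(1) sub] by simp
  moreover have "map_pmf ?F (pmf_of_set ?R) = pmf_of_set (?F ` ?R)"
    by (rule map_pmf_of_set_inj[OF inj R(2) R(1)])
  ultimately show ?thesis by simp
qed

end

context stair begin

lemma answer_expand:
  fixes a :: "nat \<Rightarrow> 'a::field"
  shows "answer n k t m i a \<rho> l c x =
    (\<Sum>r=1..n. a l ^ (r-1) * (\<Sum>p=1..AL' * m. Mmat n k t m i \<rho> r c p * x p))"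
  unfolding answer_def query_def
  by (simp add: sum_distrib_left sum_distrib_right mult.assoc) (rule sum.swap)

lemma dec_core:
  fixes a :: "nat \<Rightarrow> 'a::field"
  assumes mu: "k \<le> \<mu>" "\<mu> \<le> n" and L: "L \<subseteq> {1..n}" "card L = \<mu>" and a: "inj_on a {1..n}"
    and ans: "\<forall>l\<in>L. \<forall>c\<in>{1..cw (n+1-\<mu>)}. answer n k t m i a \<rho> l c x = answer n k t m i a \<rho> l c x'"
  shows "\<forall>r\<in>{1..n}. \<forall>c\<in>{1..cw (n+1-\<mu>)}.
     (\<Sum>p=1..AL' * m. Mmat n k t m i \<rho> r c p * x p) = (\<Sum>p=1..AL' * m. Mmat n k t m i \<rho> r c p * x' p)"
proof -
  define jm where "jm = n + 1 - \<mu>"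
  have jm: "1 \<le> jm" "jm \<le> J" using mu tk unfolding jm_def by auto
  define M where "M = Mmat n k t m i \<rho>"
  define d where "d r c = (\<Sum>p=1..AL' * m. M r c p * x p) - (\<Sum>p=1..AL' * m. M r c p * x' p)" for r c
  have dM: "d r c = d r2 c2" if "M r c = M r2 c2" for r c r2 c2 unfolding d_def using that by simp
  have d0: "d r c = 0" if "M r c = (\<lambda>_. 0)" for r c unfolding d_def using that by simp
  have fL: "finite L" using L finite_subset by blast
  have injL: "inj_on a L" using a L inj_on_subset by blast
  have eqs: "(\<Sum>r=1..n. a l ^ (r-1) * d r c) = 0" if "l \<in> L" "1 \<le> c" "c \<le> cw jm" for l c
  proof -
    have "answer n k t m i a \<rho> l c x = answer n k t m i a \<rho> l c x'" using ans that unfolding jm_def by auto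
    thus ?thesis unfolding answer_expand d_def M_def
      by (simp add: right_diff_distrib sum_subtractf)
  qed
  have claim: "\<forall>c. cw (b-1) < c \<and> c \<le> cw b \<longrightarrow> (\<forall>r\<in>{1..n}. d r c = 0)" if "1 \<le> b" "b \<le> jm" for b
    using that
  proof (induction "jm - b" arbitrary: b rule: less_induct)
    case less
    have b: "1 \<le> b" "b \<le> J" using less jm by auto
    show ?case
    proof (intro allI impI ballI)
      fix c r assume c: "cw (b-1) < c \<and> c \<le> cw b" and r0: "r \<in> {1..n}"
      have cjm: "c \<le> cw jm" using c cw_mono[of b jm] less jm by auto
      have hi: "d r c = 0" if r: "\<mu> < r" "r \<le> n" for r
      proof (cases "n + 1 - b < r")
        case True
        hence "b \<noteq> 1" using r by auto
        hence "M r c = (\<lambda>_. 0)" unfolding M_def Mmat_col[OF b, of c, OF c[THEN conjunct1] c[THEN conjunct2]]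
          using True al_rows[OF b] by (simp add: Mblk_def)
        thus ?thesis by (rule d0)
      next
        case False
        define b' where "b' = n + 2 - r"
        have b': "b < b'" "b' \<le> jm" "2 \<le> b'" using False r mu unfolding b'_def jm_def by auto
        have b'J: "1 \<le> b'" "b' \<le> J" using b' jm by auto
        have alb': "1 \<le> al b'" using al_pos[OF b'J] .
        define c'' where "c'' = (c-1) div al b' + 1"
        define r'' where "r'' = (c-1) mod al b' + 1"
        have c1: "1 \<le> c" using c by auto
        have cdec: "(c''-1) * al b' + r'' = c"
          using div_mult_mod_eq[of "c-1" "al b'"] c1 unfolding c''_def r''_def by simp
        have r''b: "1 \<le> r''" "r'' \<le> al b'" using alb' unfolding r''_def
          by (auto simp: Suc_le_eq)
        have "cw b \<le> cw (b'-1)" by (rule cw_mono) (use b' b'J in auto)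
        hence cb': "c \<le> cw (b'-1)" using c by linarith
        have cwp: "cw (b'-1) = bw b' * al b'" by (rule cw_pred) (use b' b'J in auto)
        have c''b: "1 \<le> c''" "c'' \<le> bw b'"
        proof -
          show "1 \<le> c''" unfolding c''_def by simp
          have "c - 1 < bw b' * al b'" using cb' cwp c by (cases c) auto
          hence "(c-1) div al b' < bw b'" using alb' by (simp add: div_less_iff_less_mult)
          thus "c'' \<le> bw b'" unfolding c''_def by simp
        qed
        define C2 where "C2 = cw (b'-1) + c''"
        have C2b: "cw (b'-1) < C2" "C2 \<le> cw b'" using c''b cw_rec[OF b'J] unfolding C2_def by auto
        have "M r'' C2 = Mblk n k t m i \<rho> (cat n k t m i \<rho> (b'-1)) b' r'' c''"
          using Mmat_col[OF b'J C2b, of m i \<rho> r''] unfolding M_def by (simp add: C2_def)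
        also have "\<dots> = cat n k t m i \<rho> (b'-1) (n + 2 - b') c"
          using b' r''b c''b al_rows[OF b'J] cdec by (simp add: Mblk_def)
        also have "n + 2 - b' = r" using r mu unfolding b'_def by auto
        also have "cat n k t m i \<rho> (b'-1) r c = M r c"
          unfolding M_def by (rule Mmat_stable[symmetric]) (use cb' b'J in auto)
        finally have "d r c = d r'' C2" by (intro dM) simp
        also have "\<dots> = 0"
          using less(1)[of b'] b' C2b r''b al_rows[OF b'J] b'J by auto
        finally show ?thesis .
      qed
      have "\<forall>r'\<in>{1..\<mu>}. d r' c = 0"
      proof (rule vander[OF fL L(2) injL], intro ballI)
        fix l assume l: "l \<in> L"
        have "0 = (\<Sum>r=1..n. a l ^ (r-1) * d r c)" using eqs[OF l _ cjm] c cw0 by (cases c) auto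
        also have "\<dots> = (\<Sum>r=1..\<mu>. a l ^ (r-1) * d r c) + (\<Sum>r=\<mu>+1..\<mu>+(n-\<mu>). a l ^ (r-1) * d r c)"
          using mu tk by (subst sum.ub_add_nat[symmetric]) auto
        also have "(\<Sum>r=\<mu>+1..\<mu>+(n-\<mu>). a l ^ (r-1) * d r c) = 0"
          by (intro sum.neutral) (use hi in auto)
        finally show "(\<Sum>r=1..\<mu>. a l ^ (r-1) * d r c) = 0" by simp
      qed
      thus "d r c = 0" using hi r0 by (cases "r \<le> \<mu>") auto
    qed
  qed
  show ?thesis
  proof (intro ballI)
    fix r c assume r: "r \<in> {1..n}" and c: "c \<in> {1..cw (n+1-\<mu>)}"
    hence c': "c \<le> cw jm" "1 \<le> c" unfolding jm_def by auto
    obtain b where bb: "1 \<le> b" "b \<le> J" "cw (b-1) < c" "c \<le> cw b"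
      using block_of[of c] c' cw_mono[of jm J] jm by auto
    have "b \<le> jm"
    proof (rule ccontr)
      assume "\<not> b \<le> jm"
      hence "cw jm \<le> cw (b-1)" using cw_mono[of jm "b-1"] bb by auto
      thus False using bb c' by auto
    qed
    hence "d r c = 0" using claim[OF bb(1)] bb r by auto
    thus "(\<Sum>p=1..AL' * m. Mmat n k t m i \<rho> r c p * x p) = (\<Sum>p=1..AL' * m. Mmat n k t m i \<rho> r c p * x' p)"
      unfolding d_def M_def by simp
  qed
qed

end

lemma sum_ev:
  assumes "P \<in> S" "finite S"
  shows "(\<Sum>p\<in>S. ev P p * (x p :: 'a::field)) = x P"
proof -
  have "(\<Sum>p\<in>S. ev P p * x p) = (\<Sum>p\<in>S. if P = p then x p else 0)"
    by (rule sum.cong) (auto simp: ev_def)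
  also have "\<dots> = x P" using assms by simp
  finally show ?thesis .
qed

context stair begin

lemma file_entry:
  assumes i: "1 \<le> i" "i \<le> m" and q: "1 \<le> q" "q \<le> AL'"
  shows "\<exists>r c. r \<in> {1..n} \<and> c \<in> {1..cw 1} \<and> Mmat n k t m i \<rho> r c = ev ((q-1)*m + i)"
proof -
  have a1: "1 \<le> al 1" using al_pos[of 1] by simp
  define c where "c = (q-1) div al 1 + 1"
  define r where "r = (q-1) mod al 1 + 1"
  have qdec: "(c-1) * al 1 + r = q"
    using div_mult_mod_eq[of "q-1" "al 1"] q unfolding c_def r_def by simp
  have r: "1 \<le> r" "r \<le> al 1" using a1 unfolding r_def by (auto simp: Suc_le_eq)
  have rn: "r \<le> n" using r al_rows[of 1] by simp
  have "q - 1 < bw 1 * al 1" using bw1 q by simp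
  hence "(q-1) div al 1 < bw 1" using a1 by (simp add: div_less_iff_less_mult)
  hence c: "1 \<le> c" "c \<le> bw 1" unfolding c_def by auto
  have cw1: "cw 1 = bw 1" using cw_rec[of 1] cw0 by simp
  have "Mmat n k t m i \<rho> r c = cat n k t m i \<rho> 1 r c"
    by (rule Mmat_stable) (use c cw1 in auto)
  also have "\<dots> = Mblk n k t m i \<rho> (cat n k t m i \<rho> 0) 1 r c"
    using c cw0 cw1 by simp
  also have "\<dots> = ev ((q-1)*m + i)"
    using r rn c qdec by (simp add: Mblk_def Eent_def)
  finally show ?thesis using r rn c cw1 by (intro exI[of _ r] exI[of _ c]) auto
qed

lemma decode:
  fixes a :: "nat \<Rightarrow> 'a::field"
  assumes mu: "k \<le> \<mu>" "\<mu> \<le> n" and L: "L \<subseteq> {1..n}" "card L = \<mu>" and a: "inj_on a {1..n}"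
    and i: "1 \<le> i" "i \<le> m"
  shows "\<exists>dec :: (nat \<Rightarrow> nat \<Rightarrow> 'a) \<Rightarrow> (nat \<Rightarrow> 'a).
          \<forall>x \<in> vecs (AL' * m).
            dec (\<lambda>l c. if l \<in> L \<and> c \<in> {1..cw (n+1-\<mu>)}
                        then answer n k t m i a \<rho> l c x else 0)
            = (\<lambda>j. if j \<in> {1..AL'} then x ((j - 1) * m + i) else 0)"
proof -
  let ?ans = "\<lambda>x. (\<lambda>l c. if l \<in> L \<and> c \<in> {1..cw (n+1-\<mu>)} then answer n k t m i a \<rho> l c x else 0)"
  let ?file = "\<lambda>x. (\<lambda>j. if j \<in> {1..AL'} then x ((j - 1) * m + i) else (0::'a))"
  have key: "?file x = ?file x'" if "?ans x = ?ans x'" for x x'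
  proof -
    have "\<forall>l\<in>L. \<forall>c\<in>{1..cw (n+1-\<mu>)}. answer n k t m i a \<rho> l c x = answer n k t m i a \<rho> l c x'"
      using that by (metis (no_types, lifting))
    note dc = dec_core[OF mu L a this]
    have jm: "1 \<le> n + 1 - \<mu>" "n + 1 - \<mu> \<le> J" using mu tk by auto
    have cw1: "cw 1 \<le> cw (n+1-\<mu>)" using cw_mono[of 1 "n+1-\<mu>"] jm by simp
    show ?thesis
    proof (rule ext)
      fix q show "?file x q = ?file x' q"
      proof (cases "q \<in> {1..AL'}")
        case False thus ?thesis by auto
      next
        case True
        then obtain r c where rc: "r \<in> {1..n}" "c \<in> {1..cw 1}"
          "Mmat n k t m i \<rho> r c = ev ((q-1)*m + i)"
          using file_entry[OF i, of q \<rho>] True by auto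
        have P: "1 \<le> (q-1)*m + i" "(q-1)*m + i \<le> AL' * m" using idx_range[of q i m] True i by auto
        have "(\<Sum>p=1..AL' * m. Mmat n k t m i \<rho> r c p * x p) = (\<Sum>p=1..AL' * m. Mmat n k t m i \<rho> r c p * x' p)"
        proof -
          have "c \<in> {1..cw (n+1-\<mu>)}" using rc cw1 by auto
          from dc[rule_format, OF rc(1) this] show ?thesis .
        qed
        hence "x ((q-1)*m + i) = x' ((q-1)*m + i)" unfolding rc(3) using P
          using sum_ev[of "(q-1)*m + i" "{1..AL'*m}" x] sum_ev[of "(q-1)*m + i" "{1..AL'*m}" x'] by simp
        thus ?thesis using True by simp
      qed
    qed
  qed
  define dec where "dec y = ?file (SOME x. x \<in> vecs (AL' * m) \<and> ?ans x = y)" for y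
  have "\<forall>x \<in> vecs (AL' * m). dec (?ans x) = ?file x"
  proof
    fix x :: "nat \<Rightarrow> 'a" assume x: "x \<in> vecs (AL' * m)"
    hence "\<exists>x'. x' \<in> vecs (AL' * m) \<and> ?ans x' = ?ans x" by blast
    hence "?ans (SOME x'. x' \<in> vecs (AL' * m) \<and> ?ans x' = ?ans x) = ?ans x"
      by (rule someI2_ex) simp
    thus "dec (?ans x) = ?file x" unfolding dec_def by (rule key)
  qed
  thus ?thesis by blast
qed

end

theorem theorem1:
  fixes n k t m :: nat and a :: "nat \<Rightarrow> 'a::{finite,field}"
  assumes "1 \<le> t" and "t < k" and "k \<le> n" and "1 \<le> m"
    and "n < CARD('a)"
    and "inj_on a {1..n}" and "\<forall>l\<in>{1..n}. a l \<noteq> 0"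
  shows
    "(\<forall>T i i'. T \<subseteq> {1..n} \<and> card T = t \<and> i \<in> {1..m} \<and> i' \<in> {1..m} \<longrightarrow>
        map_pmf (\<lambda>\<rho>. \<lambda>l c. if l \<in> T \<and> c \<in> {1..alpha n k t} then query n k t m i a \<rho> l c else (\<lambda>_. 0))
                (pmf_of_set (rand_space n k t m))
      = map_pmf (\<lambda>\<rho>. \<lambda>l c. if l \<in> T \<and> c \<in> {1..alpha n k t} then query n k t m i' a \<rho> l c else (\<lambda>_. 0))
                (pmf_of_set (rand_space n k t m)))
   \<and>
    (\<forall>\<mu> L i \<rho>. k \<le> \<mu> \<and> \<mu> \<le> n \<and> L \<subseteq> {1..n} \<and> card L = \<mu> \<and> i \<in> {1..m}
        \<and> \<rho> \<in> rand_space n k t m \<longrightarrow>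
       (\<mu> - t) dvd alpha' n k t \<and> alpha' n k t div (\<mu> - t) \<le> alpha n k t \<and>
       (\<exists>dec :: (nat \<Rightarrow> nat \<Rightarrow> 'a) \<Rightarrow> (nat \<Rightarrow> 'a).
          \<forall>x \<in> vecs (alpha' n k t * m).
            dec (\<lambda>l c. if l \<in> L \<and> c \<in> {1..alpha' n k t div (\<mu> - t)}
                        then answer n k t m i a \<rho> l c x else 0)
            = (\<lambda>j. if j \<in> {1..alpha' n k t} then x ((j - 1) * m + i) else 0)) \<and>
       real (alpha' n k t) / (real \<mu> * real (alpha' n k t div (\<mu> - t))) = 1 - real t / real \<mu>)"
proof -
  interpret stair n k t using assms by unfold_locales auto
  show ?thesis
  proof (intro conjI allI impI)
    fix T i i' assume h: "T \<subseteq> {1..n} \<and> card T = t \<and> i \<in> {1..m} \<and> i' \<in> {1..m}"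
    show "map_pmf (\<lambda>\<rho>. \<lambda>l c. if l \<in> T \<and> c \<in> {1..alpha n k t} then query n k t m i a \<rho> l c else (\<lambda>_. 0))
                (pmf_of_set (rand_space n k t m))
      = map_pmf (\<lambda>\<rho>. \<lambda>l c. if l \<in> T \<and> c \<in> {1..alpha n k t} then query n k t m i' a \<rho> l c else (\<lambda>_. 0))
                (pmf_of_set (rand_space n k t m))"
      using privacy[of T a i m] privacy[of T a i' m] h assms by auto
  next
    fix \<mu> L i and \<rho> :: "nat \<Rightarrow> nat \<Rightarrow> nat \<Rightarrow> 'a vec"
    assume h: "k \<le> \<mu> \<and> \<mu> \<le> n \<and> L \<subseteq> {1..n} \<and> card L = \<mu> \<and> i \<in> {1..m} \<and> \<rho> \<in> rand_space n k t m"
    define jm where "jm = n + 1 - \<mu>"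
    have jm: "1 \<le> jm" "jm \<le> J" using h assms unfolding jm_def by auto
    have aljm: "al jm = \<mu> - t" using h assms unfolding jm_def by (simp add: alph_def)
    have cwjm: "AL' div (\<mu> - t) = cw jm" using jm aljm by (simp add: catw_def)
    show "(\<mu> - t) dvd AL'" using al_dvd_AL'[of jm] jm aljm by simp
    show "AL' div (\<mu> - t) \<le> AL" using cwjm cw_mono[of jm J] jm cw_last by simp
    show "\<exists>dec :: (nat \<Rightarrow> nat \<Rightarrow> 'a) \<Rightarrow> (nat \<Rightarrow> 'a).
          \<forall>x \<in> vecs (AL' * m).
            dec (\<lambda>l c. if l \<in> L \<and> c \<in> {1..AL' div (\<mu> - t)}
                        then answer n k t m i a \<rho> l c x else 0)
            = (\<lambda>j. if j \<in> {1..AL'} then x ((j - 1) * m + i) else 0)"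
      unfolding cwjm jm_def using decode[of \<mu> L a i m \<rho>] h assms by auto
    have pr: "cw jm * al jm = AL'" by (rule cw_prod[OF jm])
    have pos: "cw jm > 0" using pr AL'_pos by (cases "cw jm") auto
    have "real AL' = real (cw jm) * (real \<mu> - real t)" using pr aljm h assms
      by (metis of_nat_diff of_nat_mult less_le_trans less_imp_le)
    moreover have "real \<mu> > 0" using h assms by auto
    ultimately show "real AL' / (real \<mu> * real (AL' div (\<mu> - t))) = 1 - real t / real \<mu>"
      unfolding cwjm using pos by (simp add: field_simps)
  qed
qed

end
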